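(* Let $F$ be a Hecke--Maa\ss{} cusp form for $\mathrm{SL}_3(\mathbb{Z})$ with Hecke eigenvalues $A_F(m,n)$, and let $\Xi_F$ be as defined below and, for $c\in\mathbb{N}$, $d\in(\mathbb{Z}/c\mathbb{Z})^\times$, $\Re(w)<0$, \[\Xi(c,\pm d;-w) \coloneqq c^{-w} \sum_{b \in \mathbb{Z}/c\mathbb{Z}} e\Big(\pm \frac{bd}{c}\Big) \sum_{m = 1}^{\infty} \frac{e(\frac{bm}{c})}{m^{1 - w}}.\] For $\ell\in\mathbb{N}$, $w_1=u_1+iv_1$, $w_2=u_2+iv_2$ with $u_1,u_2<0$, and any signs $\pm_1,\pm_2$, \[\sum_{c \mid \ell} c^{2w_2 - 1} \sum_{d \in (\mathbb{Z}/c\mathbb{Z})^{\times}} \Xi(c,\pm_1 d;-w_1) \Xi_F\Big(c,\pm_2 d,\frac{\ell}{c};-w_2\Big) = \ell^{1 - w_1 - w_2} \sum_{n_1 \mid \ell} \sum_{m,n_2 = 1}^{\infty} \frac{A_F(n_2,n_1)}{m^{1 - w_1} n_2^{1 - w_2} n_1^{1 - 2w_2}} S\Big(m, \mp_1 \pm_2 n_2; \frac{\ell}{n_1}\Big).\]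
   Context: $e(x)=e^{2\pi ix}$, $S(m,n;c)$ is the Kloosterman sum. For $c,\ell\in\mathbb{N}$, $d\in(\mathbb{Z}/c\mathbb{Z})^\times$, $\Re(w)<0$: $\Xi_F(c,\pm d,\ell;-w) \coloneqq c \sum_{n_1 \mid c\ell} \sum_{n_2 \ge1} \frac{A_F(n_2,n_1)}{n_2 n_1} S(d\ell,\pm n_2; \frac{c\ell}{n_1}) (\frac{n_2 n_1^2}{c^3 \ell})^w$. The sign $\mp_1\pm_2$ denotes the product of $-(\pm_1 1)$ and $(\pm_2 1)$. *)

theory Defs
  imports "HOL-Analysis.Analysis" "HOL-Number_Theory.Number_Theory"
begin

definition ee :: "real \<Rightarrow> complex" where
  "ee x = exp (2 * of_real pi * \<i> * of_real x)"

definition modinv :: "nat \<Rightarrow> int \<Rightarrow> int" where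
  "modinv c x = (SOME y. 0 \<le> y \<and> y < int c \<and> [x * y = 1] (mod int c))"

definition units_mod :: "nat \<Rightarrow> int set" where
  "units_mod c = {x. 0 \<le> x \<and> x < int c \<and> coprime x (int c)}"

definition kloosterman :: "int \<Rightarrow> int \<Rightarrow> nat \<Rightarrow> complex" where
  "kloosterman m n c =
     (\<Sum>x\<in>units_mod c. ee ((real_of_int (m * x + n * modinv c x)) / real c))"

definition cpow :: "real \<Rightarrow> complex \<Rightarrow> complex" where
  "cpow x w = complex_of_real x powr w"

text \<open>Xi c s d w is  \<Xi>(c, s d; -w)  (s = +1 or -1 the sign):
  c^{-w} sum_{b mod c} e(s b d / c) sum_{m>=1} e(b m / c) / m^{1-w}.\<close>
definition Xi :: "nat \<Rightarrow> int \<Rightarrow> int \<Rightarrow> complex \<Rightarrow> complex" where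
  "Xi c s d w = cpow (real c) (- w) *
     (\<Sum>b<c. ee (real_of_int (s * int b * d) / real c) *
        infsum (\<lambda>m::nat. ee (real (b * m) / real c) / cpow (real m) (1 - w)) {1..})"

text \<open>XiF A c s d l w is  \<Xi>_F(c, s d, l; -w):
  c sum_{n1 | c l} sum_{n2>=1} A(n2,n1)/(n2 n1) S(d l, s n2; c l / n1) (n2 n1^2/(c^3 l))^w.\<close>
definition XiF :: "(nat \<Rightarrow> nat \<Rightarrow> complex) \<Rightarrow> nat \<Rightarrow> int \<Rightarrow> int \<Rightarrow> nat \<Rightarrow> complex \<Rightarrow> complex" where
  "XiF A c s d l w = of_nat c *
     (\<Sum>n1 | n1 dvd c * l.
        infsum (\<lambda>n2::nat. A n2 n1 / of_nat (n2 * n1) *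
             kloosterman (d * int l) (s * int n2) (c * l div n1) *
             cpow (real (n2 * n1^2) / real (c^3 * l)) w) {1..})"

end

theory Submission imports Defs begin

lemma ee_add: "ee (x + y) = ee x * ee y"
  by (simp add: ee_def distrib_left exp_add)

lemma ee_int: "ee (real_of_int k) = 1"
proof -
  have "ee (real_of_int k) = exp ((2 * of_int k * of_real pi) * \<i>)"
    by (simp add: ee_def mult_ac)
  also have "\<dots> = 1" unfolding exp_eq_1 by (simp add: exI[of _ k])
  finally show ?thesis .
qed

lemma norm_ee: "norm (ee x) = 1"
  by (simp add: ee_def norm_exp_eq_Re)

lemma ee_cong:
  assumes "q > 0" "[u = v] (mod int q)"
  shows "ee (real_of_int u / real q) = ee (real_of_int v / real q)"
proof -
  obtain k where k: "u = v + int q * k"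
    using assms(2) by (metis cong_iff_lin cong_sym)
  have "real_of_int u / real q = real_of_int v / real q + real_of_int k"
    using assms(1) by (simp add: k field_simps)
  then show ?thesis by (simp add: ee_add ee_int)
qed

lemma ee_nat_mult: "ee (real n * x) = ee x ^ n"
  by (simp add: ee_def exp_of_nat_mult[symmetric] mult_ac)

lemma char_sum:
  assumes "c > 0"
  shows "(\<Sum>b<c. ee (real_of_int (int b * k) / real c)) = (if int c dvd k then of_nat c else 0)"
proof (cases "int c dvd k")
  case True
  then obtain j where j: "k = int c * j" by blast
  have "ee (real_of_int (int b * k) / real c) = 1" for b
  proof -
    have "real_of_int (int b * k) / real c = real_of_int (int b * j)"
      using assms by (simp add: j)
    then show ?thesis by (simp only: ee_int)
  qed
  with True show ?thesis by simp
next
  case False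
  define z where "z = ee (real_of_int k / real c)"
  have eq: "ee (real_of_int (int b * k) / real c) = z ^ b" for b
  proof -
    have "real_of_int (int b * k) / real c = real b * (real_of_int k / real c)" by simp
    then show ?thesis unfolding z_def by (simp only: ee_nat_mult)
  qed
  have zc: "z ^ c = 1"
  proof -
    have "real c * (real_of_int k / real c) = real_of_int k" using assms by simp
    then show ?thesis unfolding z_def by (metis ee_nat_mult ee_int)
  qed
  have z1: "z \<noteq> 1"
  proof
    assume "z = 1"
    then obtain n :: int where n: "2 * pi * (real_of_int k / real c) = of_int (2 * n) * pi"
      unfolding z_def ee_def exp_eq_1 by auto
    then have "real_of_int k = real_of_int n * real c" using assms by (simp add: field_simps)
    then have "k = n * int c" by (metis of_int_eq_iff of_int_mult of_int_of_nat_eq)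
    with False show False by simp
  qed
  have "(\<Sum>b<c. z ^ b) = 0"
    using z1 zc by (simp add: sum_gp_strict)
  then have "(\<Sum>b<c. ee (real_of_int (int b * k) / real c)) = 0"
    by (simp only: eq)
  with False show ?thesis by simp
qed

lemma cpow_exp: "x > 0 \<Longrightarrow> cpow x w = exp (w * of_real (ln x))"
  by (simp add: cpow_def powr_def Ln_of_real)

lemma norm_cpow: "x > 0 \<Longrightarrow> norm (cpow x w) = x powr Re w"
  by (simp add: cpow_def norm_powr_real_powr)

lemma cpow_nz: "x > 0 \<Longrightarrow> cpow x w \<noteq> 0"
  by (simp add: cpow_exp)

lemma summable_finsum:
  fixes f :: "'i \<Rightarrow> 'a \<Rightarrow> complex"
  assumes "finite I" "\<And>i. i \<in> I \<Longrightarrow> f i summable_on A"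
  shows "(\<lambda>x. \<Sum>i\<in>I. f i x) summable_on A"
  using assms
proof (induction I rule: finite_induct)
  case empty then show ?case by simp
next
  case (insert a F)
  then show ?case by (simp add: summable_on_add)
qed

lemma infsum_finsum:
  fixes f :: "'i \<Rightarrow> 'a \<Rightarrow> complex"
  assumes "finite I" "\<And>i. i \<in> I \<Longrightarrow> f i summable_on A"
  shows "infsum (\<lambda>x. \<Sum>i\<in>I. f i x) A = (\<Sum>i\<in>I. infsum (f i) A)"
  using assms
proof (induction I rule: finite_induct)
  case empty then show ?case by simp
next
  case (insert a F)
  have "infsum (\<lambda>x. \<Sum>i\<in>insert a F. f i x) A = infsum (\<lambda>x. f a x + (\<Sum>i\<in>F. f i x)) A"
    using insert by simp
  also have "\<dots> = infsum (f a) A + infsum (\<lambda>x. \<Sum>i\<in>F. f i x) A"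
    using insert by (intro infsum_add) (auto intro: summable_finsum)
  finally show ?case using insert by simp
qed

lemma real_summable_on_nat:
  fixes g :: "nat \<Rightarrow> real"
  assumes "summable g" "\<And>n. g n \<ge> 0"
  shows "g summable_on B"
proof -
  have "summable (\<lambda>n. norm (g n))" using assms by simp
  then have "g summable_on UNIV" by (rule norm_summable_imp_summable_on)
  then show ?thesis by (rule summable_on_subset_banach) simp
qed

lemma complex_summable_by_real:
  fixes f :: "'a \<Rightarrow> complex" and g :: "'a \<Rightarrow> real"
  assumes "g summable_on A" "\<And>x. x \<in> A \<Longrightarrow> norm (f x) \<le> g x"
  shows "f summable_on A"
proof -
  have g0: "x \<in> A \<Longrightarrow> g x \<ge> 0" for x using assms(2)[of x] norm_ge_zero[of "f x"] by linarith
  have "(\<lambda>x. norm (g x)) summable_on A"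
    using assms(1) by (rule summable_on_cong[THEN iffD1, rotated]) (simp add: g0)
  then have "(\<lambda>x. norm (f x)) summable_on A"
    by (rule Infinite_Sum.abs_summable_on_comparison_test) (use assms(2) g0 in auto)
  then show ?thesis by (simp add: summable_on_iff_abs_summable_on_complex)
qed

lemma powr_summable_on:
  assumes "\<sigma> > 1"
  shows "(\<lambda>n::nat. C * real n powr (-\<sigma>)) summable_on B"
proof -
  have "summable (\<lambda>n::nat. real n powr (-\<sigma>))" using assms by (simp add: summable_real_powr_iff)
  then have "summable (\<lambda>n::nat. \<bar>C\<bar> * real n powr (-\<sigma>))" by (rule summable_mult)
  then have "(\<lambda>n::nat. \<bar>C\<bar> * real n powr (-\<sigma>)) summable_on UNIV"
    by (intro real_summable_on_nat) auto
  then have "(\<lambda>n::nat. \<bar>C\<bar> * real n powr (-\<sigma>)) summable_on B"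
    by (rule summable_on_subset_banach) simp
  then show ?thesis
    by (cases "C \<ge> 0") (auto dest: summable_on_cmult_right[where c="-1"])
qed

lemma real_product_summable:
  fixes f g :: "_ \<Rightarrow> real"
  assumes "f summable_on A" "g summable_on B" "\<And>x. x \<in> A \<Longrightarrow> f x \<ge> 0" "\<And>y. y \<in> B \<Longrightarrow> g y \<ge> 0"
  shows "(\<lambda>(x,y). f x * g y) summable_on (A \<times> B)"
proof -
  have "(\<lambda>x. f x * infsum g B) summable_on A"
    using assms(1) by (rule summable_on_cmult_left)
  moreover have "x \<in> A \<Longrightarrow> ((\<lambda>y. (\<lambda>(x,y). f x * g y) (x, y)) has_sum f x * infsum g B) B" for x
    using assms(2) by (simp add: has_sum_cmult_right)
  ultimately show ?thesis
    by (intro summable_on_SigmaI[where g="\<lambda>x. f x * infsum g B"]) (auto simp: assms)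
qed

lemma modinv_prop:
  assumes "q > 0" "coprime x (int q)"
  shows "0 \<le> modinv q x \<and> modinv q x < int q \<and> [x * modinv q x = 1] (mod int q)"
proof -
  obtain y where y: "[x * y = 1] (mod int q)" using cong_solve_coprime_int[OF assms(2)] by blast
  have "[x * (y mod int q) = x * y] (mod int q)"
    by (intro cong_mult cong_refl) (simp add: cong_def)
  then have "[x * (y mod int q) = 1] (mod int q)" using y by (rule cong_trans)
  moreover have "0 \<le> y mod int q" "y mod int q < int q" using assms(1) by auto
  ultimately have "\<exists>y. 0 \<le> y \<and> y < int q \<and> [x * y = 1] (mod int q)" by blast
  then show ?thesis unfolding modinv_def by (rule someI_ex)
qed

lemma inv_unique:
  fixes x y1 y2 :: int
  assumes "[x * y1 = 1] (mod q)" "[x * y2 = 1] (mod q)"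
  shows "[y1 = y2] (mod q)"
proof -
  have "[y1 * (x * y2) = y1 * 1] (mod q)" using assms(2) by (intro cong_mult cong_refl)
  moreover have "[(x * y1) * y2 = 1 * y2] (mod q)" using assms(1) by (intro cong_mult cong_refl)
  ultimately show ?thesis by (simp add: mult_ac cong_def)
qed

lemma kloosterman_cong1:
  assumes "q > 0" "[a = a'] (mod int q)"
  shows "kloosterman a b q = kloosterman a' b q"
  unfolding kloosterman_def
proof (rule sum.cong[OF refl])
  fix x assume "x \<in> units_mod q"
  have "[a * x + b * modinv q x = a' * x + b * modinv q x] (mod int q)"
    using assms(2) by (intro cong_add cong_mult cong_refl)
  then show "ee (real_of_int (a * x + b * modinv q x) / real q) =
             ee (real_of_int (a' * x + b * modinv q x) / real q)"
    using assms(1) by (rule ee_cong[rotated])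
qed

lemma neg_mod_units:
  assumes "q > 0" "x \<in> units_mod q"
  shows "(-x) mod int q \<in> units_mod q" "(- ((- x) mod int q)) mod int q = x"
proof -
  have x0: "0 \<le> x" "x < int q" and cx: "coprime x (int q)" using assms by (auto simp: units_mod_def)
  show "(- ((- x) mod int q)) mod int q = x"
    using x0 by (simp add: mod_minus_eq mod_pos_pos_trivial)
  show "(- x) mod int q \<in> units_mod q"
    using assms(1) cx by (simp add: units_mod_def)
qed

lemma kl_term:
  assumes q: "q > 0" and x: "x \<in> units_mod q"
  shows "ee (real_of_int (a * ((- x) mod int q) + b * modinv q ((- x) mod int q)) / real q) =
             ee (real_of_int (- a * x + - b * modinv q x) / real q)"
proof -
  have cx: "coprime x (int q)" using x by (auto simp: units_mod_def)
  have "(- x) mod int q \<in> units_mod q" by (rule neg_mod_units[OF q x])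
  then have cx': "coprime ((- x) mod int q) (int q)" by (simp add: units_mod_def)
  have i1: "[x * modinv q x = 1] (mod int q)" using modinv_prop[OF q cx] by blast
  have i2: "[((- x) mod int q) * modinv q ((- x) mod int q) = 1] (mod int q)"
    using modinv_prop[OF q cx'] by blast
  have "[((- x) mod int q) * (- modinv q x) = (-x) * (- modinv q x)] (mod int q)"
    by (intro cong_mult cong_refl) (simp add: cong_def)
  moreover have "(-x) * (- modinv q x) = x * modinv q x" by simp
  ultimately have "[((- x) mod int q) * (- modinv q x) = 1] (mod int q)"
    using i1 by (metis cong_trans)
  then have inv: "[modinv q ((- x) mod int q) = - modinv q x] (mod int q)"
    using i2 by (rule inv_unique[rotated])
  have "[a * ((- x) mod int q) + b * modinv q ((- x) mod int q) = a * (-x) + b * (- modinv q x)] (mod int q)"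
    by (intro cong_add cong_mult cong_refl inv) (simp add: cong_def)
  then have "[a * ((- x) mod int q) + b * modinv q ((- x) mod int q) = - a * x + - b * modinv q x] (mod int q)"
    by simp
  then show ?thesis
    using q by (rule ee_cong[rotated])
qed

lemma kloosterman_neg:
  assumes q: "q > 0"
  shows "kloosterman (-a) (-b) q = kloosterman a b q"
  unfolding kloosterman_def
  by (rule sum.reindex_bij_witness[where i="\<lambda>x. (-x) mod int q" and j="\<lambda>x. (-x) mod int q"])
    (auto simp del: of_int_add of_int_mult of_int_minus simp: neg_mod_units[OF q] kl_term[OF q])

lemma norm_kloosterman: "norm (kloosterman a b q) \<le> real q"
proof -
  have "norm (kloosterman a b q) \<le> (\<Sum>x\<in>units_mod q. norm (ee (real_of_int (a * x + b * modinv q x) / real q)))"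
    unfolding kloosterman_def by (rule norm_sum)
  also have "\<dots> = real (card (units_mod q))" by (simp add: norm_ee)
  also have "card (units_mod q) \<le> card {0..<int q}"
    by (rule card_mono) (auto simp: units_mod_def)
  then have "real (card (units_mod q)) \<le> real q" by simp
  finally show ?thesis .
qed

lemma kloosterman_sign:
  assumes "q > 0" "s \<in> {1, -1}"
  shows "kloosterman (- s * a) b q = kloosterman a (- s * b) q"
  using assms kloosterman_neg[OF assms(1), of a "- b"] by auto

lemma cpow_add1: "x > 0 \<Longrightarrow> cpow x (w + 1) = cpow x w * of_real x"
proof -
  assume x: "x > 0"
  have "cpow x (w + 1) = exp (w * of_real (ln x)) * exp (of_real (ln x))"
    using x by (simp add: cpow_exp distrib_right exp_add)
  also have "exp (of_real (ln x) :: complex) = of_real x" using x by (simp flip: of_real_exp)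
  finally show ?thesis using x by (simp add: cpow_exp)
qed

lemma norm_inv_cpow:
  assumes "m \<ge> (1::nat)"
  shows "norm (z / cpow (real m) (1 - w)) = norm z * real m powr (-(1 - Re w))"
proof -
  have "norm (z / cpow (real m) (1 - w)) = norm z / real m powr (1 - Re w)"
    using assms by (simp add: norm_divide norm_cpow)
  moreover have "real m powr (-(1 - Re w)) = inverse (real m powr (1 - Re w))" by (rule powr_minus)
  ultimately show ?thesis by (simp add: divide_inverse)
qed

lemma inv_cpow_summable:
  assumes "Re w < 0" "\<And>m. m \<ge> 1 \<Longrightarrow> norm (z m) \<le> C"
  shows "(\<lambda>m::nat. z m / cpow (real m) (1 - w)) summable_on {1..}"
proof (rule complex_summable_by_real)
  show "(\<lambda>n::nat. C * real n powr (-(1 - Re w))) summable_on {1..}"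
    using assms(1) by (intro powr_summable_on) simp
  fix m :: nat assume "m \<in> {1..}"
  then have m: "m \<ge> 1" by simp
  have "norm (z m / cpow (real m) (1 - w)) = norm (z m) * real m powr (-(1 - Re w))"
    using m by (rule norm_inv_cpow)
  also have "\<dots> \<le> C * real m powr (-(1 - Re w))"
    using assms(2)[OF m] by (intro mult_right_mono) auto
  finally show "norm (z m / cpow (real m) (1 - w)) \<le> C * real m powr (-(1 - Re w))" .
qed

lemma Xi_formula:
  assumes c: "c > 0" and w: "Re w < 0"
  shows "Xi c s d w = cpow (real c) (1 - w) *
    infsum (\<lambda>m::nat. if int c dvd (s * d + int m) then 1 / cpow (real m) (1 - w) else 0) {1..}"
proof -
  define g where "g b m = ee (real (b * m) / real c) / cpow (real m) (1 - w)" for b m :: nat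
  have sg: "g b summable_on {1..}" for b
    unfolding g_def by (rule inv_cpow_summable[OF w, where C=1]) (simp add: norm_ee)
  have pt: "(\<Sum>b<c. ee (real_of_int (s * int b * d) / real c) * g b m) =
        of_nat c * (if int c dvd (s * d + int m) then 1 / cpow (real m) (1 - w) else 0)" for m
  proof -
    have "ee (real_of_int (s * int b * d) / real c) * g b m =
          ee (real_of_int (int b * (s * d + int m)) / real c) / cpow (real m) (1 - w)" for b
    proof -
      have "real_of_int (int b * (s * d + int m)) / real c =
            real_of_int (s * int b * d) / real c + real (b * m) / real c"
        using c by (simp add: field_simps)
      then show ?thesis unfolding g_def by (simp add: ee_add)
    qed
    then have "(\<Sum>b<c. ee (real_of_int (s * int b * d) / real c) * g b m) =
          (\<Sum>b<c. ee (real_of_int (int b * (s * d + int m)) / real c)) / cpow (real m) (1 - w)"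
      by (simp add: sum_divide_distrib)
    also have "\<dots> = (if int c dvd (s * d + int m) then of_nat c else 0) / cpow (real m) (1 - w)"
      using c by (simp only: char_sum)
    finally show ?thesis by simp
  qed
  have "Xi c s d w = cpow (real c) (- w) *
      (\<Sum>b<c. infsum (\<lambda>m. ee (real_of_int (s * int b * d) / real c) * g b m) {1..})"
    unfolding Xi_def g_def by (simp only: infsum_cmult_right')
  also have "(\<Sum>b<c. infsum (\<lambda>m. ee (real_of_int (s * int b * d) / real c) * g b m) {1..}) =
      infsum (\<lambda>m. \<Sum>b<c. ee (real_of_int (s * int b * d) / real c) * g b m) {1..}"
    by (rule infsum_finsum[symmetric]) (simp_all only: summable_on_cmult_right sg finite_lessThan)
  also have "\<dots> = of_nat c *
      infsum (\<lambda>m::nat. if int c dvd (s * d + int m) then 1 / cpow (real m) (1 - w) else 0) {1..}"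
    by (simp only: pt infsum_cmult_right')
  also have "cpow (real c) (- w) * (of_nat c * infsum (\<lambda>m::nat. if int c dvd (s * d + int m) then 1 / cpow (real m) (1 - w) else 0) {1..})
      = (cpow (real c) (- w) * of_real (real c)) * infsum (\<lambda>m::nat. if int c dvd (s * d + int m) then 1 / cpow (real m) (1 - w) else 0) {1..}"
    by simp
  also have "cpow (real c) (- w) * of_real (real c) = cpow (real c) (1 - w)"
    using cpow_add1[of "real c" "- w"] c by simp
  finally show ?thesis .
qed

definition K0 :: "(nat \<Rightarrow> nat \<Rightarrow> complex) \<Rightarrow> nat \<Rightarrow> complex \<Rightarrow> complex \<Rightarrow> int \<Rightarrow> nat \<Rightarrow> nat \<Rightarrow> nat \<Rightarrow> complex" where
  "K0 A l w1 w2 \<sigma> n1 m n2 = A n2 n1 /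
     (cpow (real m) (1 - w1) * cpow (real n2) (1 - w2) * cpow (real n1) (1 - 2 * w2)) *
     kloosterman (int m) (\<sigma> * int n2) (l div n1)"

lemma K0_norm_bound:
  assumes "m \<ge> 1" "n2 \<ge> 1" "n1 \<ge> 1" "Re w2 < 0"
  shows "norm (K0 A l w1 w2 \<sigma> n1 m n2) \<le>
     (real l * real m powr (-(1 - Re w1))) * (norm (A n2 n1) / real n2 powr (1 - Re w2))"
proof -
  define P where "P = real m powr (1 - Re w1)"
  define Q where "Q = real n2 powr (1 - Re w2)"
  define R where "R = real n1 powr (1 - 2 * Re w2)"
  define Kn where "Kn = norm (kloosterman (int m) (\<sigma> * int n2) (l div n1))"
  have P: "P > 0" and Q: "Q > 0" and R: "R \<ge> 1" using assms
    by (auto simp: P_def Q_def R_def ge_one_powr_ge_zero)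
  have Kn: "0 \<le> Kn" "Kn \<le> real l"
  proof -
    show "0 \<le> Kn" by (simp add: Kn_def)
    have "Kn \<le> real (l div n1)" unfolding Kn_def by (rule norm_kloosterman)
    also have "real (l div n1) \<le> real l" by simp
    finally show "Kn \<le> real l" .
  qed
  have "norm (K0 A l w1 w2 \<sigma> n1 m n2) = norm (A n2 n1) / (P * Q * R) * Kn"
    using assms by (simp add: K0_def norm_mult norm_divide norm_cpow P_def Q_def R_def Kn_def)
  also have "\<dots> = (norm (A n2 n1) / Q) * (1 / P) * (Kn / R)"
    by (simp add: field_simps)
  also have "\<dots> \<le> (norm (A n2 n1) / Q) * (1 / P) * real l"
  proof (intro mult_left_mono)
    have "Kn / R \<le> Kn" using R Kn by (simp add: divide_le_eq_1 field_simps mult_le_cancel_left1)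
    then show "Kn / R \<le> real l" using Kn by linarith
  qed (use P Q in auto)
  also have "1 / P = real m powr (-(1 - Re w1))"
    unfolding P_def by (simp only: powr_minus divide_inverse mult_1)
  finally show ?thesis by (simp add: mult_ac Q_def)
qed

lemma A_summable_on:
  assumes "summable (\<lambda>n2. norm (A n2 n1) / real n2 powr \<sigma>)"
  shows "(\<lambda>n2. norm (A n2 n1) / real n2 powr \<sigma>) summable_on B"
  using assms by (rule real_summable_on_nat) simp

lemma K0_summable:
  assumes "summable (\<lambda>n2. norm (A n2 n1) / real n2 powr (1 - Re w2))"
    and "Re w1 < 0" "Re w2 < 0" "n1 \<ge> 1"
  shows "(\<lambda>(m, n2). K0 A l w1 w2 \<sigma> n1 m n2) summable_on ({1..} \<times> {1..})"
proof (rule complex_summable_by_real)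
  show "(\<lambda>(m, n2). (real l * real m powr (-(1 - Re w1))) * (norm (A n2 n1) / real n2 powr (1 - Re w2)))
      summable_on ({1..} \<times> {1..})"
    by (rule real_product_summable[where f="\<lambda>m. real l * real m powr (-(1 - Re w1))"
          and g="\<lambda>n2. norm (A n2 n1) / real n2 powr (1 - Re w2)"])
       (use assms powr_summable_on[of "1 - Re w1" "real l" "{1..}"] in \<open>auto intro: A_summable_on\<close>)
  fix x :: "nat \<times> nat" assume "x \<in> {1..} \<times> {1..}"
  then show "norm ((\<lambda>(m, n2). K0 A l w1 w2 \<sigma> n1 m n2) x) \<le>
      (\<lambda>(m, n2). (real l * real m powr (-(1 - Re w1))) * (norm (A n2 n1) / real n2 powr (1 - Re w2))) x"
    using assms K0_norm_bound[of _ _ n1 w2 A l w1 \<sigma>] by auto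
qed

lemma divisor_image:
  fixes c k l :: nat
  assumes "c * k = l" "k \<ge> 1" "c \<ge> 1"
  shows "(\<lambda>m. m * k) ` {m. m \<ge> 1 \<and> coprime m c} = {M. M \<ge> 1 \<and> gcd M l = k}"
proof (intro equalityI subsetI)
  fix M assume "M \<in> (\<lambda>m. m * k) ` {m. m \<ge> 1 \<and> coprime m c}"
  then obtain m where m: "m \<ge> 1" "coprime m c" "M = m * k" by blast
  have "gcd M l = gcd (k * m) (k * c)" unfolding m(3) assms(1)[symmetric] by (simp only: mult.commute)
  also have "\<dots> = k * gcd m c" by (rule gcd_mult_distrib_nat[symmetric])
  also have "\<dots> = k" using m(2) by simp
  finally have "gcd M l = k" .
  moreover have "M \<ge> 1" using m assms(2) by simp
  ultimately show "M \<in> {M. M \<ge> 1 \<and> gcd M l = k}" by simp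
next
  fix M assume "M \<in> {M. M \<ge> 1 \<and> gcd M l = k}"
  then have M: "M \<ge> 1" "gcd M l = k" by auto
  have "k dvd M" using gcd_dvd1[of M l] unfolding M(2) .
  then obtain m where m: "M = k * m" by blast
  have "k * gcd m c = gcd (k * m) (k * c)" by (rule gcd_mult_distrib_nat)
  also have "\<dots> = gcd M l" unfolding m assms(1)[symmetric] by (simp only: mult.commute)
  also have "\<dots> = k" by (rule M(2))
  finally have "k * gcd m c = k * 1" by simp
  then have "gcd m c = 1" using assms(2) by simp
  then have "coprime m c" by (rule coprime_iff_gcd_eq_1[THEN iffD2])
  moreover have "m \<ge> 1" using M(1) m by (cases "m = 0") simp_all
  moreover have "M = m * k" using m by (simp only: mult.commute)
  ultimately show "M \<in> (\<lambda>m. m * k) ` {m. m \<ge> 1 \<and> coprime m c}"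
    by (intro image_eqI[where x=m]) simp_all
qed

lemma divisor_sum_delta:
  fixes l M :: nat
  assumes "l \<ge> 1"
  shows "(\<Sum>c | c dvd l. if gcd M l = l div c then z else 0) = z"
proof -
  define g where "g = gcd M l"
  have g: "g dvd l" "g > 0" using assms by (auto simp: g_def)
  then obtain h where h: "l = g * h" by blast
  have h0: "h > 0" using h assms by (cases "h = 0") simp_all
  have gM: "gcd M l = g" by (simp add: g_def)
  have iff: "(gcd M l = l div c) \<longleftrightarrow> c = h" if "c dvd l" for c
  proof
    assume "gcd M l = l div c"
    then have "l div c = g" using gM by simp
    then have "l = c * g" using that by (metis dvd_mult_div_cancel)
    then have "g * h = g * c" using h by (simp add: mult.commute)
    then show "c = h" using g by simp
  next
    assume "c = h"
    have "l div h = g" using h h0 by simp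
    then show "gcd M l = l div c" using gM \<open>c = h\<close> by simp
  qed
  have "(\<Sum>c | c dvd l. if gcd M l = l div c then z else 0) = (\<Sum>c | c dvd l. if c = h then z else 0)"
    by (rule sum.cong) (auto simp: iff)
  also have "\<dots> = z" using h assms by (simp add: sum.delta)
  finally show ?thesis .
qed

lemma reindex_divisors:
  fixes H :: "nat \<Rightarrow> complex"
  assumes l: "l \<ge> 1" and H: "H summable_on {1..}"
  shows "(\<Sum>c | c dvd l. infsum (\<lambda>m. if coprime m c then H (m * (l div c)) else 0) {1..}) = infsum H {1..}"
proof -
  have fin: "finite {c. c dvd l}" using l by simp
  have step: "infsum (\<lambda>m. if coprime m c then H (m * (l div c)) else 0) {1..} =
      infsum (\<lambda>M. if gcd M l = l div c then H M else 0) {1..}" if c: "c dvd l" for c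
  proof -
    define k where "k = l div c"
    have ck: "c * k = l" "k \<ge> 1" "c \<ge> 1" using c l by (auto simp: k_def intro: Nat.gr0I)
    have "infsum (\<lambda>m. if coprime m c then H (m * k) else 0) {1..} =
        infsum (\<lambda>m. H (m * k)) {m. m \<ge> 1 \<and> coprime m c}"
      by (rule infsum_cong_neutral) auto
    also have "\<dots> = infsum H ((\<lambda>m. m * k) ` {m. m \<ge> 1 \<and> coprime m c})"
      by (rule infsum_reindex[symmetric, unfolded comp_def]) (use ck in \<open>auto simp: inj_on_def\<close>)
    also have "\<dots> = infsum H {M. M \<ge> 1 \<and> gcd M l = k}" using divisor_image[OF ck] by simp
    also have "\<dots> = infsum (\<lambda>M. if gcd M l = k then H M else 0) {1..}"
      by (rule infsum_cong_neutral) auto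
    finally show ?thesis unfolding k_def .
  qed
  have summ: "(\<lambda>M. if gcd M l = l div c then H M else 0) summable_on {1..}" for c
  proof -
    have "H summable_on {M. M \<ge> 1 \<and> gcd M l = l div c}"
      using H by (rule summable_on_subset_banach) auto
    then show ?thesis by (rule summable_on_cong_neutral[THEN iffD1, rotated -1]) auto
  qed
  have "(\<Sum>c | c dvd l. infsum (\<lambda>m. if coprime m c then H (m * (l div c)) else 0) {1..}) =
        (\<Sum>c | c dvd l. infsum (\<lambda>M. if gcd M l = l div c then H M else 0) {1..})"
    by (rule sum.cong[OF refl], rule step) simp
  also have "\<dots> = infsum (\<lambda>M. \<Sum>c | c dvd l. if gcd M l = l div c then H M else 0) {1..}"
    by (rule infsum_finsum[symmetric]) (use fin summ in auto)
  also have "\<dots> = infsum H {1..}"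
    using l by (simp only: divisor_sum_delta)
  finally show ?thesis .
qed

lemma of_real_exp_ln: "x > 0 \<Longrightarrow> (of_real x :: complex) = exp (of_real (ln x))"
  by (simp flip: of_real_exp)

lemma pow_ident:
  fixes c k m n1 n2 :: real
  assumes pos: "c > 0" "k > 0" "m > 0" "n1 > 0" "n2 > 0"
  shows "cpow c (2 * w2 - 1) * cpow c (1 - w1) * of_real c / cpow m (1 - w1) *
           (a / of_real (n2 * n1) * cpow (n2 * n1 ^ 2 / (c ^ 3 * k)) w2) =
         cpow (c * k) (1 - w1 - w2) *
           (a / (cpow (m * k) (1 - w1) * cpow n2 (1 - w2) * cpow n1 (1 - 2 * w2)))"
proof -
  define Lc where "Lc = (of_real (ln c) :: complex)"
  define Lk where "Lk = (of_real (ln k) :: complex)"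
  define Lm where "Lm = (of_real (ln m) :: complex)"
  define L1 where "L1 = (of_real (ln n1) :: complex)"
  define L2 where "L2 = (of_real (ln n2) :: complex)"
  have e1: "cpow (n2 * n1 ^ 2 / (c ^ 3 * k)) w2 = exp (w2 * (L2 + 2 * L1 - 3 * Lc - Lk))"
    using pos by (simp add: cpow_exp ln_mult ln_div ln_realpow Lc_def Lk_def L1_def L2_def diff_diff_eq)
  have e2: "(of_real (n2 * n1) :: complex) = exp (L2 + L1)"
  proof -
    have "(of_real (n2 * n1) :: complex) = exp (of_real (ln (n2 * n1)))"
      using pos by (intro of_real_exp_ln) simp
    then show ?thesis using pos by (simp add: ln_mult_pos L1_def L2_def)
  qed
  have e3: "(of_real c :: complex) = exp Lc" using pos by (simp add: of_real_exp_ln Lc_def)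
  have "cpow c (2 * w2 - 1) * cpow c (1 - w1) * of_real c / cpow m (1 - w1) *
           (a / of_real (n2 * n1) * cpow (n2 * n1 ^ 2 / (c ^ 3 * k)) w2)
      = a * (exp ((2 * w2 - 1) * Lc) * exp ((1 - w1) * Lc) * exp Lc * exp (w2 * (L2 + 2 * L1 - 3 * Lc - Lk))
            / (exp ((1 - w1) * Lm) * exp (L2 + L1)))"
    unfolding e1 e2 e3 using pos by (simp add: cpow_exp Lc_def Lm_def)
  also have "exp ((2 * w2 - 1) * Lc) * exp ((1 - w1) * Lc) * exp Lc * exp (w2 * (L2 + 2 * L1 - 3 * Lc - Lk))
            / (exp ((1 - w1) * Lm) * exp (L2 + L1)) =
        exp ((2 * w2 - 1) * Lc + (1 - w1) * Lc + Lc + w2 * (L2 + 2 * L1 - 3 * Lc - Lk) - ((1 - w1) * Lm + (L2 + L1)))"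
    by (simp only: exp_add exp_diff)
  also have "(2 * w2 - 1) * Lc + (1 - w1) * Lc + Lc + w2 * (L2 + 2 * L1 - 3 * Lc - Lk) - ((1 - w1) * Lm + (L2 + L1))
      = (1 - w1 - w2) * (Lc + Lk) - ((1 - w1) * (Lm + Lk) + (1 - w2) * L2 + (1 - 2 * w2) * L1)"
    by (simp add: algebra_simps)
  also have "a * exp ((1 - w1 - w2) * (Lc + Lk) - ((1 - w1) * (Lm + Lk) + (1 - w2) * L2 + (1 - 2 * w2) * L1))
      = exp ((1 - w1 - w2) * (Lc + Lk)) * (a / (exp ((1 - w1) * (Lm + Lk)) * exp ((1 - w2) * L2) * exp ((1 - 2 * w2) * L1)))"
    by (simp add: exp_diff exp_add)
  also have "\<dots> = cpow (c * k) (1 - w1 - w2) *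
           (a / (cpow (m * k) (1 - w1) * cpow n2 (1 - w2) * cpow n1 (1 - 2 * w2)))"
    using pos by (simp add: cpow_exp ln_mult Lc_def Lk_def Lm_def L1_def L2_def)
  finally show ?thesis .
qed

lemma dvd_iff_mod:
  fixes d :: int
  assumes c: "c > 0" and s: "s \<in> {1, -1}" and d: "0 \<le> d" "d < int c"
  shows "(int c dvd s * d + int m) \<longleftrightarrow> d = (- s * int m) mod int c"
proof -
  have "(int c dvd s * d + int m) \<longleftrightarrow> int c dvd d - (- s * int m)"
  proof (cases "s = 1")
    case True then show ?thesis by simp
  next
    case False
    then have "s = -1" using s by simp
    have "s * d + int m = - (d - (- s * int m))" using \<open>s = -1\<close> by simp
    then show ?thesis by (simp only: dvd_minus_iff)
  qed
  also have "\<dots> \<longleftrightarrow> [d = - s * int m] (mod int c)" by (simp add: cong_iff_dvd_diff)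
  also have "\<dots> \<longleftrightarrow> d mod int c = (- s * int m) mod int c" by (simp add: cong_def)
  also have "d mod int c = d" using d by simp
  finally show ?thesis .
qed

lemma finite_units_mod: "finite (units_mod c)"
  by (rule finite_subset[of _ "{0..<int c}"]) (auto simp: units_mod_def)

lemma units_sum_delta:
  assumes c: "c > 0" and s: "s \<in> {1, -1}"
  shows "(\<Sum>d\<in>units_mod c. if int c dvd s * d + int m then z else 0) = (if coprime m c then z else 0)"
proof -
  define r where "r = (- s * int m) mod int c"
  have "(\<Sum>d\<in>units_mod c. if int c dvd s * d + int m then z else 0) =
        (\<Sum>d\<in>units_mod c. if d = r then z else 0)"
    by (rule sum.cong[OF refl]) (use c s in \<open>simp add: units_mod_def dvd_iff_mod r_def\<close>)
  also have "\<dots> = (if r \<in> units_mod c then z else 0)"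
    by (rule sum.delta) (rule finite_units_mod)
  also have "(r \<in> units_mod c) \<longleftrightarrow> coprime m c"
  proof -
    have "0 \<le> r" "r < int c" using c by (simp_all add: r_def)
    moreover have "coprime r (int c) \<longleftrightarrow> coprime (- s * int m) (int c)"
      unfolding r_def using c by (intro coprime_mod_left_iff) simp
    moreover have "coprime (- s * int m) (int c) \<longleftrightarrow> coprime m c"
      using s by auto
    ultimately show ?thesis by (simp add: units_mod_def)
  qed
  finally show ?thesis .
qed

lemma kl_swap:
  assumes c: "c > 0" "k > 0" and s1: "s1 \<in> {1, -1}" and cd: "int c dvd s1 * d + int m"
    and n1: "n1 dvd c * k"
  shows "kloosterman (d * int k) (s2 * int n2) (c * k div n1) =
         kloosterman (int (m * k)) (- s1 * s2 * int n2) (c * k div n1)"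
proof -
  define q where "q = c * k div n1"
  have q: "q > 0" using c n1 unfolding q_def by (metis dvd_div_eq_0_iff mult_pos_pos bot_nat_0.not_eq_extremum)
  have "q dvd c * k" using n1 unfolding q_def by (metis dvd_def dvd_div_mult_self mult.commute)
  then have qd: "int q dvd int (c * k)" by (simp only: of_nat_dvd_iff)
  have ss: "s1 * s1 = 1" using s1 by auto
  have "int c dvd s1 * (s1 * d + int m)" using cd by simp
  moreover have "s1 * (s1 * d + int m) = d + s1 * int m" by (simp add: algebra_simps ss)
  ultimately have "int c dvd d + s1 * int m" by simp
  then have "int c * int k dvd (d + s1 * int m) * int k" by (rule mult_dvd_mono) simp
  moreover have "(d + s1 * int m) * int k = d * int k - (- s1 * int (m * k))" by (simp add: algebra_simps)
  ultimately have "int (c * k) dvd d * int k - (- s1 * int (m * k))" by simp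
  then have "int q dvd d * int k - (- s1 * int (m * k))" using qd by (rule dvd_trans[rotated])
  then have cg: "[d * int k = - s1 * int (m * k)] (mod int q)" by (simp add: cong_iff_dvd_diff)
  have "kloosterman (d * int k) (s2 * int n2) q = kloosterman (- s1 * int (m * k)) (s2 * int n2) q"
    by (rule kloosterman_cong1[OF q cg])
  also have "\<dots> = kloosterman (int (m * k)) (- s1 * (s2 * int n2)) q"
    by (rule kloosterman_sign[OF q s1])
  finally show ?thesis unfolding q_def by (simp add: mult.assoc)
qed

lemma XiF_eq:
  assumes c: "c > 0" "k > 0" and s1: "s1 \<in> {1, -1}" and cd: "int c dvd s1 * d + int m"
  shows "XiF A c s2 d k w2 = of_nat c * (\<Sum>n1 | n1 dvd c * k.
     infsum (\<lambda>n2. A n2 n1 / of_nat (n2 * n1) *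
       kloosterman (int (m * k)) (- s1 * s2 * int n2) (c * k div n1) *
       cpow (real (n2 * n1 ^ 2) / real (c ^ 3 * k)) w2) {1..})"
  unfolding XiF_def
  by (intro arg_cong[where f="\<lambda>x. of_nat c * x"] sum.cong refl infsum_cong)
     (simp add: kl_swap[OF c s1 cd])

lemma pow_ident_nat:
  fixes c k m n1 n2 :: nat
  assumes pos: "c > 0" "k > 0" "m > 0" "n1 > 0" "n2 > 0"
  shows "cpow (real c) (2 * w2 - 1) * cpow (real c) (1 - w1) * of_nat c / cpow (real m) (1 - w1) *
           (a / of_nat (n2 * n1) * b * cpow (real (n2 * n1 ^ 2) / real (c ^ 3 * k)) w2) =
         cpow (real (c * k)) (1 - w1 - w2) *
           (a / (cpow (real (m * k)) (1 - w1) * cpow (real n2) (1 - w2) * cpow (real n1) (1 - 2 * w2)) * b)"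
proof -
  have *: "cpow (real c) (2 * w2 - 1) * cpow (real c) (1 - w1) * of_real (real c) / cpow (real m) (1 - w1) *
           ((a * b) / of_real (real n2 * real n1) * cpow (real n2 * real n1 ^ 2 / (real c ^ 3 * real k)) w2) =
         cpow (real c * real k) (1 - w1 - w2) *
           ((a * b) / (cpow (real m * real k) (1 - w1) * cpow (real n2) (1 - w2) * cpow (real n1) (1 - 2 * w2)))"
    by (rule pow_ident) (use pos in auto)
  have e1: "(of_nat c :: complex) = of_real (real c)" "(of_nat (n2 * n1) :: complex) = of_real (real n2 * real n1)"
    by simp_all
  have e2: "real (n2 * n1 ^ 2) / real (c ^ 3 * k) = real n2 * real n1 ^ 2 / (real c ^ 3 * real k)"
    "real (c * k) = real c * real k" "real (m * k) = real m * real k" by simp_all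
  show ?thesis unfolding e1 e2 using * by (simp add: times_divide_eq_left mult.assoc mult.left_commute)
qed

lemma per_c:
  assumes l: "l \<ge> 1" and cl: "c dvd l" and s1: "s1 \<in> {1, -1}"
    and w1: "Re w1 < 0" and w2: "Re w2 < 0"
  shows "cpow (real c) (2 * w2 - 1) * (\<Sum>d\<in>units_mod c. Xi c s1 d w1 * XiF A c s2 d (l div c) w2)
    = cpow (real l) (1 - w1 - w2) *
      infsum (\<lambda>m. if coprime m c then
         (\<Sum>n1 | n1 dvd l. infsum (\<lambda>n2. K0 A l w1 w2 (- s1 * s2) n1 (m * (l div c)) n2) {1..})
         else 0) {1..}"
proof -
  define k where "k = l div c"
  have ck: "c > 0" "k > 0" "c * k = l" using l cl by (auto simp: k_def intro: Nat.gr0I)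
  define XM where "XM m = of_nat c * (\<Sum>n1 | n1 dvd c * k.
     infsum (\<lambda>n2. A n2 n1 / of_nat (n2 * n1) *
       kloosterman (int (m * k)) (- s1 * s2 * int n2) (c * k div n1) *
       cpow (real (n2 * n1 ^ 2) / real (c ^ 3 * k)) w2) {1..})" for m
  define G where "G m = XM m / cpow (real m) (1 - w1)" for m
  define Hk where "Hk m = (\<Sum>n1 | n1 dvd l. infsum (\<lambda>n2. K0 A l w1 w2 (- s1 * s2) n1 (m * k) n2) {1..})" for m
  define P where "P d m = (int c dvd s1 * d + int m)" for d m
  have one: "Xi c s1 d w1 * XiF A c s2 d k w2 =
      cpow (real c) (1 - w1) * infsum (\<lambda>m. if P d m then G m else 0) {1..}" for d
  proof -
    have "Xi c s1 d w1 * XiF A c s2 d k w2 = cpow (real c) (1 - w1) *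
      infsum (\<lambda>m. (if P d m then 1 / cpow (real m) (1 - w1) else 0) * XiF A c s2 d k w2) {1..}"
      unfolding Xi_formula[OF ck(1) w1] P_def by (simp only: infsum_cmult_left' mult.assoc)
    also have "infsum (\<lambda>m. (if P d m then 1 / cpow (real m) (1 - w1) else 0) * XiF A c s2 d k w2) {1..}
        = infsum (\<lambda>m. if P d m then G m else 0) {1..}"
      by (rule infsum_cong) (simp add: G_def XM_def P_def XiF_eq[OF ck(1,2) s1])
    finally show ?thesis .
  qed
  have summ: "(\<lambda>m. if P d m then G m else 0) summable_on {1..}" for d
  proof -
    have "(\<lambda>m::nat. (if P d m then XiF A c s2 d k w2 else 0) / cpow (real m) (1 - w1)) summable_on {1..}"
      by (rule inv_cpow_summable[OF w1, where C="norm (XiF A c s2 d k w2)"]) simp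
    then show ?thesis
      by (rule summable_on_cong[THEN iffD1, rotated])
         (simp add: G_def XM_def P_def XiF_eq[OF ck(1,2) s1])
  qed
  have two: "(\<Sum>d\<in>units_mod c. Xi c s1 d w1 * XiF A c s2 d k w2) =
      cpow (real c) (1 - w1) * infsum (\<lambda>m. if coprime m c then G m else 0) {1..}"
  proof -
    have "(\<Sum>d\<in>units_mod c. Xi c s1 d w1 * XiF A c s2 d k w2) =
        cpow (real c) (1 - w1) * (\<Sum>d\<in>units_mod c. infsum (\<lambda>m. if P d m then G m else 0) {1..})"
      by (simp only: one sum_distrib_left)
    also have "(\<Sum>d\<in>units_mod c. infsum (\<lambda>m. if P d m then G m else 0) {1..}) =
        infsum (\<lambda>m. \<Sum>d\<in>units_mod c. if P d m then G m else 0) {1..}"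
      by (rule infsum_finsum[symmetric]) (rule finite_units_mod, rule summ)
    also have "\<dots> = infsum (\<lambda>m. if coprime m c then G m else 0) {1..}"
      unfolding P_def using ck(1) s1 by (simp only: units_sum_delta)
    finally show ?thesis .
  qed
  have three: "cpow (real c) (2 * w2 - 1) * cpow (real c) (1 - w1) * G m = cpow (real l) (1 - w1 - w2) * Hk m"
    if m: "m \<ge> 1" for m
  proof -
    define X where "X = cpow (real c) (2 * w2 - 1) * cpow (real c) (1 - w1) * of_nat c / cpow (real m) (1 - w1)"
    have "cpow (real c) (2 * w2 - 1) * cpow (real c) (1 - w1) * G m =
       X * (\<Sum>n1 | n1 dvd c * k.
     infsum (\<lambda>n2. A n2 n1 / of_nat (n2 * n1) *
       kloosterman (int (m * k)) (- s1 * s2 * int n2) (c * k div n1) *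
       cpow (real (n2 * n1 ^ 2) / real (c ^ 3 * k)) w2) {1..})"
      unfolding G_def XM_def X_def by (simp add: field_simps)
    also have "\<dots> = (\<Sum>n1 | n1 dvd l.
     infsum (\<lambda>n2. X * (A n2 n1 / of_nat (n2 * n1) *
       kloosterman (int (m * k)) (- s1 * s2 * int n2) (c * k div n1) *
       cpow (real (n2 * n1 ^ 2) / real (c ^ 3 * k)) w2)) {1..})"
      unfolding ck(3) by (simp only: sum_distrib_left infsum_cmult_right')
    also have "\<dots> = (\<Sum>n1 | n1 dvd l. infsum (\<lambda>n2. cpow (real l) (1 - w1 - w2) * K0 A l w1 w2 (- s1 * s2) n1 (m * k) n2) {1..})"
    proof (rule sum.cong[OF refl], rule infsum_cong)
      fix n1 n2 assume n1: "n1 \<in> {n1. n1 dvd l}" and n2: "n2 \<in> {1::nat..}"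
      have n1p: "n1 > 0" using n1 l by (auto intro: Nat.gr0I)
      show "X * (A n2 n1 / of_nat (n2 * n1) *
       kloosterman (int (m * k)) (- s1 * s2 * int n2) (c * k div n1) *
       cpow (real (n2 * n1 ^ 2) / real (c ^ 3 * k)) w2) =
        cpow (real l) (1 - w1 - w2) * K0 A l w1 w2 (- s1 * s2) n1 (m * k) n2"
        unfolding X_def K0_def ck(3)[symmetric]
        by (rule pow_ident_nat) (use ck n1p n2 m in auto)
    qed
    also have "\<dots> = cpow (real l) (1 - w1 - w2) * Hk m"
      unfolding Hk_def by (simp only: sum_distrib_left infsum_cmult_right')
    finally show ?thesis .
  qed
  have "cpow (real c) (2 * w2 - 1) * (\<Sum>d\<in>units_mod c. Xi c s1 d w1 * XiF A c s2 d k w2) =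
      infsum (\<lambda>m. cpow (real c) (2 * w2 - 1) * cpow (real c) (1 - w1) * (if coprime m c then G m else 0)) {1..}"
    unfolding two by (simp only: infsum_cmult_right' mult.assoc)
  also have "\<dots> = infsum (\<lambda>m. cpow (real l) (1 - w1 - w2) * (if coprime m c then Hk m else 0)) {1..}"
    by (rule infsum_cong) (simp add: three)
  also have "\<dots> = cpow (real l) (1 - w1 - w2) * infsum (\<lambda>m. if coprime m c then Hk m else 0) {1..}"
    by (rule infsum_cmult_right')
  finally show ?thesis unfolding Hk_def k_def .
qed

theorem mainTheorem5:
  fixes A :: "nat \<Rightarrow> nat \<Rightarrow> complex"
    and l :: nat and w1 w2 :: complex and s1 s2 :: int
  assumes A_abs: "\<And>n1 \<sigma>. n1 \<ge> 1 \<Longrightarrow> \<sigma> > 1 \<Longrightarrow>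
             summable (\<lambda>n2. norm (A n2 n1) / real n2 powr \<sigma>)"
    and l: "l \<ge> 1"
    and u1: "Re w1 < 0" and u2: "Re w2 < 0"
    and s1: "s1 \<in> {1, -1}" and s2: "s2 \<in> {1, -1}"
  shows "(\<Sum>c | c dvd l. cpow (real c) (2 * w2 - 1) *
            (\<Sum>d\<in>units_mod c. Xi c s1 d w1 * XiF A c s2 d (l div c) w2))
       = cpow (real l) (1 - w1 - w2) *
         (\<Sum>n1 | n1 dvd l.
            infsum (\<lambda>(m, n2). A n2 n1 /
                 (cpow (real m) (1 - w1) * cpow (real n2) (1 - w2) * cpow (real n1) (1 - 2 * w2)) *
                 kloosterman (int m) (- s1 * s2 * int n2) (l div n1))
              ({1..} \<times> {1..}))"
proof -
  define L where "L = cpow (real l) (1 - w1 - w2)"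
  define F where "F n1 M = infsum (\<lambda>n2. K0 A l w1 w2 (- s1 * s2) n1 M n2) {1..}" for n1 M
  define H where "H M = (\<Sum>n1 | n1 dvd l. F n1 M)" for M
  have fin: "finite {n1. n1 dvd l}" using l by simp
  have Ksum: "(\<lambda>(m, n2). K0 A l w1 w2 (- s1 * s2) n1 m n2) summable_on ({1..} \<times> {1..})"
    if n1: "n1 dvd l" for n1
  proof -
    have "n1 \<ge> 1" using n1 l by (cases "n1 = 0") auto
    moreover have "summable (\<lambda>n2. norm (A n2 n1) / real n2 powr (1 - Re w2))"
      using A_abs[of n1 "1 - Re w2"] u2 \<open>n1 \<ge> 1\<close> by simp
    ultimately show ?thesis using u1 u2 by (intro K0_summable)
  qed
  have Fsum: "F n1 summable_on {1..}" if "n1 dvd l" for n1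
    unfolding F_def using summable_on_Sigma_banach[OF Ksum[OF that]] by simp
  have Hsum: "H summable_on {1..}"
    unfolding H_def by (rule summable_finsum[OF fin]) (use Fsum in simp)
  have "(\<Sum>c | c dvd l. cpow (real c) (2 * w2 - 1) *
            (\<Sum>d\<in>units_mod c. Xi c s1 d w1 * XiF A c s2 d (l div c) w2))
      = (\<Sum>c | c dvd l. L * infsum (\<lambda>m. if coprime m c then H (m * (l div c)) else 0) {1..})"
    unfolding L_def H_def F_def
    by (rule sum.cong[OF refl], rule per_c[OF l _ s1 u1 u2]) simp
  also have "\<dots> = L * infsum H {1..}"
    by (simp only: sum_distrib_left[symmetric] reindex_divisors[OF l Hsum])
  also have "infsum H {1..} = (\<Sum>n1 | n1 dvd l. infsum (F n1) {1..})"
    unfolding H_def by (rule infsum_finsum[OF fin]) (use Fsum in simp)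
  also have "\<dots> = (\<Sum>n1 | n1 dvd l. infsum (\<lambda>(m, n2). K0 A l w1 w2 (- s1 * s2) n1 m n2) ({1..} \<times> {1..}))"
    unfolding F_def by (rule sum.cong[OF refl], rule infsum_Sigma'_banach, rule Ksum) simp
  also have "\<dots> = (\<Sum>n1 | n1 dvd l.
            infsum (\<lambda>(m, n2). A n2 n1 /
                 (cpow (real m) (1 - w1) * cpow (real n2) (1 - w2) * cpow (real n1) (1 - 2 * w2)) *
                 kloosterman (int m) (- s1 * s2 * int n2) (l div n1))
              ({1..} \<times> {1..}))"
    unfolding K0_def by simp
  finally show ?thesis unfolding L_def .
qed

end
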